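(* Let $\alpha\in\mathbb{Z}_2^n$ with $\alpha_{n-1}=0$. Then $\mathrm{adp}^{\oplus}(\overline{\alpha},\overline{\alpha}\to0)\le\mathrm{adp}^{\oplus}(\alpha,\alpha\to0)$.
   Context: For $x\in\mathbb{Z}_2^n$, $x=(x_0,\dots,x_{n-1})$ is identified with the integer $\sum_i x_i2^{n-1-i}$ ($x_{n-1}$ least significant); $+$ is addition modulo $2^n$, $\oplus$ is bitwise XOR, $\overline{x}$ is the bitwise complement. $\mathrm{adp}^{\oplus}(\alpha,\beta\to\gamma)=4^{-n}\#\{(x,y)\in(\mathbb{Z}_2^n)^2: (x+\alpha)\oplus(y+\beta)=(x\oplus y)+\gamma\}$. *)

theory Defs
  imports Complex_Main
begin

text \<open>Elements of Z_2^n are identified with naturals in {0..<2^n} (bit x_i is the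
coefficient of 2^(n-1-i), so x_(n-1) is the least significant bit).\<close>

definition addn :: "nat \<Rightarrow> nat \<Rightarrow> nat \<Rightarrow> nat" where
  "addn n x y = (x + y) mod 2 ^ n"

definition compl_n :: "nat \<Rightarrow> nat \<Rightarrow> nat" where
  "compl_n n x = (2 ^ n - 1) - x"

definition adp_xor :: "nat \<Rightarrow> nat \<Rightarrow> nat \<Rightarrow> nat \<Rightarrow> real" where
  "adp_xor n a b g =
     real (card {(x, y). x < 2 ^ n \<and> y < 2 ^ n \<and>
        xor (addn n x a) (addn n y b) = addn n (xor x y) g}) / 4 ^ n"

end

theory Submission
  imports Defs
begin

definition cnt :: "nat \<Rightarrow> nat \<Rightarrow> nat \<Rightarrow> nat \<Rightarrow> nat" where
 "cnt m a cx cy = (\<Sum>x<2^m. \<Sum>y<2^m. if xor ((x+a+cx) mod 2^m) ((y+a+cy) mod 2^m) = xor x y then 1 else 0)"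

lemma sum_split2: "(\<Sum>x<2*n. f x) = (\<Sum>x'<n. \<Sum>x0<2. f (2*x'+x0)) " for f :: "nat \<Rightarrow> nat"
  by (induction n) (auto simp: numeral_2_eq_2 lessThan_Suc)

lemma sum2: "(\<Sum>x0<2. g x0) = g 0 + g (1::nat)" for g :: "nat \<Rightarrow> nat"
  by (simp add: numeral_2_eq_2 lessThan_Suc)

lemma mod_step: "(e::nat) < 2 \<Longrightarrow> (2*u+e) mod 2^Suc k = 2*(u mod 2^k) + e"
proof -
  assume e: "e < 2"
  have "(2*u+e) mod (2*2^k) = 2 * ((2*u+e) div 2 mod 2^k) + (2*u+e) mod 2"
    by (rule mod_mult2_eq)
  moreover have "(2*u+e) div 2 = u" "(2*u+e) mod 2 = e" using e by auto
  ultimately show ?thesis by simp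
qed

lemma xor_step: "(e::nat) < 2 \<Longrightarrow> f < 2 \<Longrightarrow> xor (2*A+e) (2*B+f) = 2*xor A B + (if e = f then 0 else 1)"
  by (subst xor_rec) (auto simp: less_2_cases_iff)

lemma eqlem: "(2*(P::nat) + (if e then 0 else 1) = 2*Q + (if g then 0 else 1)) \<longleftrightarrow> (P=Q \<and> (e \<longleftrightarrow> g))"
  by (cases e; cases g) presburger+

lemma bitstep:
  assumes "x0 < 2" "y0 < 2" "cx \<le> 1" "cy \<le> (1::nat)"
  shows "(xor ((2*x'+x0+a+cx) mod 2^Suc k) ((2*y'+y0+a+cy) mod 2^Suc k) = xor (2*x'+x0) (2*y'+y0))
     \<longleftrightarrow> (cx = cy \<and> xor ((x'+a div 2+(x0+a mod 2+cx) div 2) mod 2^k) ((y'+a div 2+(y0+a mod 2+cy) div 2) mod 2^k) = xor x' y')"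
proof -
  have hx: "2*x'+x0+a+cx = 2*(x'+a div 2+(x0+a mod 2+cx) div 2) + (x0+a mod 2+cx) mod 2" by simp
  have hy: "2*y'+y0+a+cy = 2*(y'+a div 2+(y0+a mod 2+cy) div 2) + (y0+a mod 2+cy) mod 2" by simp
  have l: "(x0+a mod 2+cx) mod 2 = (y0+a mod 2+cy) mod 2 \<longleftrightarrow> (x0 = y0 \<longleftrightarrow> cx = cy)"
    using assms by (auto simp: less_2_cases_iff le_Suc_eq mod2_eq_if)
  show ?thesis
    apply (subst hx, subst hy)
    apply (subst mod_step, simp)+
    apply (subst xor_step, simp, simp)+
    apply (subst xor_step[OF assms(1,2)])
    apply (subst eqlem)
    using assms l by (auto simp: less_2_cases_iff)
qed

lemma cnt_Suc:
  assumes "cx \<le> 1" "cy \<le> (1::nat)"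
  shows "cnt (Suc k) a cx cy = (\<Sum>x0<2. \<Sum>y0<2. if cx = cy then cnt k (a div 2) ((x0+a mod 2+cx) div 2) ((y0+a mod 2+cy) div 2) else 0)"
proof -
  define C where "C x0 y0 x' y' = (if xor ((x'+a div 2+(x0+a mod 2+cx) div 2) mod 2^k) ((y'+a div 2+(y0+a mod 2+cy) div 2) mod 2^k) = xor x' y' then 1 else (0::nat))" for x0 y0 x' y'
  have "cnt (Suc k) a cx cy = (\<Sum>x'<2^k. \<Sum>x0<2. \<Sum>y'<2^k. \<Sum>y0<2. if cx = cy then C x0 y0 x' y' else 0)"
  proof -
    have pt: "(if xor ((2*x'+x0+a+cx) mod (2*2^k)) ((2*y'+y0+a+cy) mod (2*2^k)) = xor (2*x'+x0) (2*y'+y0) then 1 else 0)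
         = (if cx = cy then C x0 y0 x' y' else (0::nat))" if h: "x0 < 2" "y0 < 2" for x' x0 y' y0
    proof -
      have e: "(xor ((2*x'+x0+a+cx) mod (2*2^k)) ((2*y'+y0+a+cy) mod (2*2^k)) = xor (2*x'+x0) (2*y'+y0))
         \<longleftrightarrow> (cx = cy \<and> xor ((x'+a div 2+(x0+a mod 2+cx) div 2) mod 2^k) ((y'+a div 2+(y0+a mod 2+cy) div 2) mod 2^k) = xor x' y')"
        using bitstep[unfolded power_Suc, OF h assms] .
      show ?thesis unfolding e C_def by simp
    qed
    show ?thesis
      unfolding cnt_def power_Suc sum_split2
      by (intro sum.cong refl) (simp only: lessThan_iff pt)
  qed
  also have "\<dots> = (\<Sum>x0<2. \<Sum>x'<2^k. \<Sum>y0<2. \<Sum>y'<2^k. if cx = cy then C x0 y0 x' y' else 0)"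
    by (simp add: sum2 sum.distrib)
  also have "\<dots> = (\<Sum>x0<2. \<Sum>y0<2. \<Sum>x'<2^k. \<Sum>y'<2^k. if cx = cy then C x0 y0 x' y' else 0)"
    by (simp add: sum2 sum.distrib)
  also have "\<dots> = (\<Sum>x0<2. \<Sum>y0<2. if cx = cy then cnt k (a div 2) ((x0+a mod 2+cx) div 2) ((y0+a mod 2+cy) div 2) else 0)"
    by (cases "cx = cy") (simp_all add: cnt_def C_def)
  finally show ?thesis .
qed

lemma cnt0: "cnt 0 a cx cy = 1"
  by (simp add: cnt_def)

lemma cnt_cross: "cnt k a 0 1 = (if k = 0 then 1 else 0)" "cnt k a 1 0 = (if k = 0 then 1 else 0)"
  by (cases k; simp add: cnt0 cnt_Suc)+

lemma cnt_even0: "even a \<Longrightarrow> cnt (Suc k) a 0 0 = 4 * cnt k (a div 2) 0 0"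
  by (simp add: cnt_Suc sum2 even_iff_mod_2_eq_zero)
lemma cnt_odd1: "odd a \<Longrightarrow> cnt (Suc k) a 1 1 = 4 * cnt k (a div 2) 1 1"
  by (simp add: cnt_Suc sum2 odd_iff_mod_2_eq_one)
lemma cnt_odd0: "odd a \<Longrightarrow> cnt (Suc k) a 0 0 = cnt k (a div 2) 0 0 + cnt k (a div 2) 0 1 + cnt k (a div 2) 1 0 + cnt k (a div 2) 1 1"
  by (simp add: cnt_Suc sum2 odd_iff_mod_2_eq_one)
lemma cnt_even1: "even a \<Longrightarrow> cnt (Suc k) a 1 1 = cnt k (a div 2) 0 0 + cnt k (a div 2) 0 1 + cnt k (a div 2) 1 0 + cnt k (a div 2) 1 1"
  by (simp add: cnt_Suc sum2 even_iff_mod_2_eq_zero)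

lemma cnt_inv: "cnt m a 1 1 \<le> 3 * cnt m a 0 0"
proof (induction m arbitrary: a)
  case 0
  then show ?case by (simp add: cnt0)
next
  case (Suc k)
  show ?case
  proof (cases "k = 0")
    case True
    have "cnt (Suc 0) a 1 1 \<le> 3 * cnt (Suc 0) a 0 0"
      by (cases "even a") (simp_all only: cnt_even0 cnt_even1 cnt_odd0 cnt_odd1 cnt0 not_False_eq_True, simp_all)
    then show ?thesis using True by simp
  next
    case False
    have ih: "cnt k (a div 2) 1 1 \<le> 3 * cnt k (a div 2) 0 0" by (rule Suc.IH)
    have cr: "cnt k (a div 2) 0 1 = 0" "cnt k (a div 2) 1 0 = 0" using False cnt_cross[of k "a div 2"] by auto
    show ?thesis
    proof (cases "even a")
      case True
      show ?thesis using cnt_even0[OF True, of k] cnt_even1[OF True, of k] cr ih by linarith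
    next
      case False
      show ?thesis using cnt_odd0[OF False, of k] cnt_odd1[OF False, of k] cr ih by linarith
    qed
  qed
qed

lemma compl_step: "a < 2 ^ Suc k \<Longrightarrow> compl_n (Suc k) a = 2 * compl_n k (a div 2) + (1 - a mod 2)"
proof -
  assume a: "a < 2 ^ Suc k"
  define N :: nat where "N = 2 ^ k"
  have N: "a < 2 * N" using a by (simp add: N_def)
  have d: "a = 2 * (a div 2) + a mod 2" by simp
  have m: "a mod 2 < 2" by simp
  show ?thesis unfolding compl_n_def power_Suc N_def[symmetric]
    using N d m by linarith
qed

lemma div2_lem: "(r::nat) < 2 \<Longrightarrow> (2 * X + r) div 2 = X"
  by auto

lemma cnt_compl: "a < 2 ^ m \<Longrightarrow> cnt m (compl_n m a) 0 0 = cnt m a 1 1 \<and> cnt m (compl_n m a) 1 1 = cnt m a 0 0"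
proof (induction m arbitrary: a)
  case 0
  then show ?case by (simp add: cnt0)
next
  case (Suc k)
  have "a < 2 ^ k * 2" using Suc.prems by (simp add: mult.commute)
  then have lt: "a div 2 < 2 ^ k" by (rule less_mult_imp_div_less)
  have ih: "cnt k (compl_n k (a div 2)) 0 0 = cnt k (a div 2) 1 1 \<and> cnt k (compl_n k (a div 2)) 1 1 = cnt k (a div 2) 0 0"
    using Suc.IH[OF lt] .
  have cs: "compl_n (Suc k) a = 2 * compl_n k (a div 2) + (1 - a mod 2)"
    using compl_step[OF Suc.prems] .
  have r2: "1 - a mod 2 < 2" by simp
  have dv: "compl_n (Suc k) a div 2 = compl_n k (a div 2)" unfolding cs
    using r2 by (simp only: div2_lem)
  have ev: "even (compl_n (Suc k) a) \<longleftrightarrow> odd a" unfolding cs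
    by (cases "even a") (simp_all add: odd_iff_mod_2_eq_one even_iff_mod_2_eq_zero)
  show ?case
  proof (cases "even a")
    case True
    then have o: "odd (compl_n (Suc k) a)" using ev by blast
    show ?thesis using cnt_even0[OF True, of k] cnt_even1[OF True, of k]
        cnt_odd0[OF o, of k] cnt_odd1[OF o, of k] ih
        cnt_cross[of k "a div 2"] cnt_cross[of k "compl_n k (a div 2)"] unfolding dv
      by (cases "k = 0") auto
  next
    case False
    then have o: "even (compl_n (Suc k) a)" using ev by blast
    show ?thesis using cnt_even0[OF o, of k] cnt_even1[OF o, of k]
        cnt_odd0[OF False, of k] cnt_odd1[OF False, of k] ih
        cnt_cross[of k "a div 2"] cnt_cross[of k "compl_n k (a div 2)"] unfolding dv
      by (cases "k = 0") auto
  qed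
qed

lemma card_pairs: "card {(x,y). x < N \<and> y < (N::nat) \<and> P x y} = (\<Sum>x<N. \<Sum>y<N. if P x y then 1 else 0)"
proof -
  have "{(x,y). x < N \<and> y < N \<and> P x y} = Sigma {..<N} (\<lambda>x. {y\<in>{..<N}. P x y})" by auto
  then have "card {(x,y). x < N \<and> y < N \<and> P x y} = (\<Sum>x<N. card {y\<in>{..<N}. P x y})"
    by (simp add: card_SigmaI)
  also have "\<dots> = (\<Sum>x<N. \<Sum>y<N. if P x y then 1 else 0)"
  proof (intro sum.cong refl)
    fix x
    have "card {y\<in>{..<N}. P x y} = sum (\<lambda>_. 1) {y\<in>{..<N}. P x y}" by (rule card_eq_sum)
    also have "\<dots> = (\<Sum>y<N. if P x y then 1 else 0)" by (rule sum.inter_filter) simp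
    finally show "card {y\<in>{..<N}. P x y} = (\<Sum>y<N. if P x y then 1 else 0)" .
  qed
  finally show ?thesis .
qed

lemma adp_cnt: "adp_xor n a a 0 = real (cnt n a 0 0) / 4 ^ n"
proof -
  have x: "addn n (xor x y) 0 = xor x y" if "x < 2^n" "y < 2^n" for x y
  proof -
    have "take_bit n (xor x y) = xor x y" using that
      by (simp add: take_bit_xor take_bit_nat_eq_self)
    then show ?thesis by (simp add: addn_def take_bit_eq_mod)
  qed
  have eq: "{(x, y). x < 2 ^ n \<and> y < 2 ^ n \<and> xor (addn n x a) (addn n y a) = addn n (xor x y) 0}
      = {(x, y). x < 2 ^ n \<and> y < 2 ^ n \<and> xor ((x+a+0) mod 2^n) ((y+a+0) mod 2^n) = xor x y}"
    using x by (auto simp: addn_def)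
  show ?thesis unfolding adp_xor_def cnt_def eq card_pairs by simp
qed

theorem lemma5:
  fixes n \<alpha> :: nat
  assumes "0 < n" and "\<alpha> < 2 ^ n" and "\<not> bit \<alpha> 0"
  shows "adp_xor n (compl_n n \<alpha>) (compl_n n \<alpha>) 0 \<le> adp_xor n \<alpha> \<alpha> 0"
proof -
  obtain m where n: "n = Suc m" using assms(1) gr0_implies_Suc by blast
  have ev: "even \<alpha>" using assms(3) by (simp add: bit_0)
  have lt: "\<alpha> < 2 ^ Suc m" using assms(2) n by simp
  have lt2: "\<alpha> div 2 < 2 ^ m" using lt by auto
  have cs: "compl_n (Suc m) \<alpha> = 2 * compl_n m (\<alpha> div 2) + 1"
    using compl_step[OF lt] ev by (simp add: even_iff_mod_2_eq_zero)
  have od: "odd (compl_n (Suc m) \<alpha>)" unfolding cs by simp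
  have dv: "compl_n (Suc m) \<alpha> div 2 = compl_n m (\<alpha> div 2)" unfolding cs by simp
  have c1: "cnt (Suc m) \<alpha> 0 0 = 4 * cnt m (\<alpha> div 2) 0 0" using cnt_even0[OF ev] .
  have c2: "cnt (Suc m) (compl_n (Suc m) \<alpha>) 0 0 = cnt m (\<alpha> div 2) 1 1 + cnt m (\<alpha> div 2) 0 0 + 2 * (if m = 0 then 1 else 0)"
    using cnt_odd0[OF od, of m] cnt_compl[OF lt2] cnt_cross[of m] unfolding dv by auto
  have le: "cnt (Suc m) (compl_n (Suc m) \<alpha>) 0 0 \<le> cnt (Suc m) \<alpha> 0 0"
    unfolding c1 c2 using cnt_inv[of m "\<alpha> div 2"] by (cases "m = 0") (auto simp: cnt0)
  show ?thesis unfolding adp_cnt n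
    by (rule divide_right_mono) (use le in auto)
qed

end
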